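(* Let $p\neq q$ be primes and let $G$ be a finite minimal non-abelian group with $G=PQ$, where $P$ is a cyclic Sylow $p$-subgroup of $G$ and $Q$ is an elementary abelian Sylow $q$-subgroup of $G$ which is a minimal normal subgroup of $G$. Then $\omega(G)=|Q|+1$.
   Context: A minimal non-abelian group is a non-abelian group all of whose proper subgroups are abelian. A subset $X$ of a group $G$ is a set of pairwise non-commuting elements if $xy\neq yx$ for any two distinct $x,y\in X$. For a finite non-abelian group $G$, $\omega(G)$ denotes the maximum cardinality of a set of pairwise non-commuting elements of $G$. *)

theory Defs
  imports "HOL-Algebra.Algebra"
begin

definition abelian_subset :: "('a, 'b) monoid_scheme \<Rightarrow> 'a set \<Rightarrow> bool" where
  "abelian_subset G H \<longleftrightarrow> (\<forall>x\<in>H. \<forall>y\<in>H. x \<otimes>\<^bsub>G\<^esub> y = y \<otimes>\<^bsub>G\<^esub> x)"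

definition minimal_nonabelian :: "('a, 'b) monoid_scheme \<Rightarrow> bool" where
  "minimal_nonabelian G \<longleftrightarrow> group G \<and> \<not> abelian_subset G (carrier G) \<and>
     (\<forall>H. subgroup H G \<and> H \<noteq> carrier G \<longrightarrow> abelian_subset G H)"

definition sylow_subgroup :: "('a, 'b) monoid_scheme \<Rightarrow> nat \<Rightarrow> 'a set \<Rightarrow> bool" where
  "sylow_subgroup G p H \<longleftrightarrow> subgroup H G \<and> card H = p ^ Factorial_Ring.multiplicity p (order G)"

definition elementary_abelian :: "('a, 'b) monoid_scheme \<Rightarrow> nat \<Rightarrow> 'a set \<Rightarrow> bool" where
  "elementary_abelian G p H \<longleftrightarrow> subgroup H G \<and> abelian_subset G H \<and>
     (\<forall>x\<in>H. x [^]\<^bsub>G\<^esub> p = \<one>\<^bsub>G\<^esub>)"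

definition minimal_normal :: "('a, 'b) monoid_scheme \<Rightarrow> 'a set \<Rightarrow> bool" where
  "minimal_normal G N \<longleftrightarrow> normal N G \<and> N \<noteq> {\<one>\<^bsub>G\<^esub>} \<and>
     (\<forall>M. normal M G \<and> M \<subseteq> N \<and> M \<noteq> {\<one>\<^bsub>G\<^esub>} \<longrightarrow> M = N)"

definition pairwise_noncommuting :: "('a, 'b) monoid_scheme \<Rightarrow> 'a set \<Rightarrow> bool" where
  "pairwise_noncommuting G S \<longleftrightarrow> S \<subseteq> carrier G \<and>
     (\<forall>x\<in>S. \<forall>y\<in>S. x \<noteq> y \<longrightarrow> x \<otimes>\<^bsub>G\<^esub> y \<noteq> y \<otimes>\<^bsub>G\<^esub> x)"

definition omega :: "('a, 'b) monoid_scheme \<Rightarrow> nat" where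
  "omega G = Max (card ` {S. pairwise_noncommuting G S})"

end

theory Submission
  imports Defs
begin


lemma (in group) comm_inv:
  assumes "a \<in> carrier G" "y \<in> carrier G" "a \<otimes> y = y \<otimes> a"
  shows "inv a \<otimes> y = y \<otimes> inv a"
  by (metis assms(1,2,3) conjugation_is_surj inv_closed inv_inv inv_solve_right m_closed)

lemma (in group) comm_int_pow:
  assumes "a \<in> carrier G" "y \<in> carrier G" "a \<otimes> y = y \<otimes> a"
  shows "a [^] (k::int) \<otimes> y = y \<otimes> a [^] k"
proof (cases k rule: int_cases)
  case (nonneg n)
  then show ?thesis using group_commutes_pow[OF assms(3,1,2)] by (simp add: int_pow_int)
next
  case (neg n)
  have "a [^] (Suc n) \<otimes> y = y \<otimes> a [^] (Suc n)" using group_commutes_pow[OF assms(3,1,2)] .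
  then show ?thesis unfolding neg using assms
    by (metis comm_inv int_pow_neg_int nat_pow_closed)
qed

lemma (in group) inv_cancel_l [simp]: "x \<in> carrier G \<Longrightarrow> y \<in> carrier G \<Longrightarrow> inv x \<otimes> (x \<otimes> y) = y"
  by (simp add: m_assoc[symmetric])
lemma (in group) inv_cancel_r [simp]: "x \<in> carrier G \<Longrightarrow> y \<in> carrier G \<Longrightarrow> x \<otimes> (inv x \<otimes> y) = y"
  by (simp add: m_assoc[symmetric])

lemma (in group) comm_mult:
  assumes "a \<in> carrier G" "b \<in> carrier G" "y \<in> carrier G" "a \<otimes> y = y \<otimes> a" "b \<otimes> y = y \<otimes> b"
  shows "(a \<otimes> b) \<otimes> y = y \<otimes> (a \<otimes> b)"
  by (metis assms m_assoc)

lemma int_coprime_prime: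
  assumes "Factorial_Ring.prime (p::nat)" "\<not> int p dvd k"
  shows "\<exists>u v. u * int p + v * k = 1"
proof -
  have "Factorial_Ring.prime (int p)" using assms(1) by (simp only: prime_nat_int_transfer)
  then have "coprime (int p) k" using assms(2) by (rule prime_imp_coprime)
  then have g: "gcd (int p) k = 1" by (rule coprime_imp_gcd_eq_1)
  obtain u v where "u * int p + v * k = gcd (int p) k" using bezout_int by blast
  then have "u * int p + v * k = 1" using g by simp
  then show ?thesis by blast
qed

locale mn_setup = group G for G (structure) +
  fixes Q :: "'a set" and x :: 'a and p :: nat
  assumes fin: "finite (carrier G)"
  and Qn: "Q \<lhd> G" and Qab: "\<And>a b. a \<in> Q \<Longrightarrow> b \<in> Q \<Longrightarrow> a \<otimes> b = b \<otimes> a"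
  and x: "x \<in> carrier G"
  and PQ: "\<And>g. g \<in> carrier G \<Longrightarrow> \<exists>k::int. \<exists>y\<in>Q. g = x [^] k \<otimes> y"
  and xne: "x \<noteq> \<one>"
  and F1: "\<And>y. y \<in> Q \<Longrightarrow> x \<otimes> y = y \<otimes> x \<Longrightarrow> y = \<one>"
  and F2: "\<And>y. y \<in> Q \<Longrightarrow> x [^] (int p) \<otimes> y = y \<otimes> x [^] (int p)"
  and pprime: "Factorial_Ring.prime p"
  and Qne: "Q \<noteq> {\<one>}"
begin

lemma Qsg: "subgroup Q G" using normal_imp_subgroup[OF Qn] .
lemma Qsub: "Q \<subseteq> carrier G" using subgroup.subset[OF Qsg] .
lemma QI[simp]: "y \<in> Q \<Longrightarrow> y \<in> carrier G" using Qsub by (rule subsetD)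
lemma Qfin: "finite Q" using finite_subset[OF Qsub fin] .
lemma Qone[simp]: "\<one> \<in> Q" using subgroup.one_closed[OF Qsg] .
lemma Qmult: "a \<in> Q \<Longrightarrow> b \<in> Q \<Longrightarrow> a \<otimes> b \<in> Q" using subgroup.m_closed[OF Qsg] .
lemma Qinv: "a \<in> Q \<Longrightarrow> inv a \<in> Q" using subgroup.m_inv_closed[OF Qsg] .
lemma conj: "g \<in> carrier G \<Longrightarrow> y \<in> Q \<Longrightarrow> g \<otimes> y \<otimes> inv g \<in> Q"
  using normal.inv_op_closed2[OF Qn] .

lemma F3:
  assumes z: "z \<in> Q" and nd: "\<not> int p dvd k" and c: "x [^] k \<otimes> z = z \<otimes> x [^] k"
  shows "z = \<one>"
proof -
  obtain u v where uv: "u * int p + v * k = 1" using int_coprime_prime[OF pprime nd] by blast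
  have "x = x [^] (int p * u + k * v)" using uv x by (simp add: mult.commute)
  also have "\<dots> = (x [^] int p) [^] u \<otimes> (x [^] k) [^] v" using x by (simp add: int_pow_mult int_pow_pow)
  finally have xe: "x = (x [^] int p) [^] u \<otimes> (x [^] k) [^] v" .
  have "(x [^] int p) [^] u \<otimes> z = z \<otimes> (x [^] int p) [^] u"
    by (rule comm_int_pow) (use x z F2 in auto)
  moreover have "(x [^] k) [^] v \<otimes> z = z \<otimes> (x [^] k) [^] v"
    by (rule comm_int_pow) (use x z c in auto)
  then have "((x [^] int p) [^] u \<otimes> (x [^] k) [^] v) \<otimes> z = z \<otimes> ((x [^] int p) [^] u \<otimes> (x [^] k) [^] v)"
    by (intro comm_mult) (use x z \<open>(x [^] int p) [^] u \<otimes> z = z \<otimes> (x [^] int p) [^] u\<close> in auto)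
  then have "x \<otimes> z = z \<otimes> x" using xe by simp
  then show ?thesis using F1 z by blast
qed

lemma F2': "y \<in> Q \<Longrightarrow> x [^] (int p * m) \<otimes> y = y \<otimes> x [^] (int p * m)"
  using comm_int_pow[of "x [^] int p" y m] F2 x by (auto simp: int_pow_pow)

lemma xpow_comm: "x [^] (a::int) \<otimes> x [^] (b::int) = x [^] b \<otimes> x [^] a"
  using x by (simp add: int_pow_mult[symmetric] add.commute)

definition "A0 = {g. \<exists>y\<in>Q. \<exists>m. g = y \<otimes> x [^] (int p * m)}"
definition "Ay y = {g. \<exists>k::int. g = y \<otimes> x [^] k \<otimes> inv y}"

lemma A0_comm:
  assumes "s \<in> A0" "t \<in> A0" shows "s \<otimes> t = t \<otimes> s"
proof -
  obtain y1 m1 where s: "y1 \<in> Q" "s = y1 \<otimes> x [^] (int p * m1)" using assms(1) A0_def by blast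
  obtain y2 m2 where t: "y2 \<in> Q" "t = y2 \<otimes> x [^] (int p * m2)" using assms(2) A0_def by blast
  let ?a = "x [^] (int p * m1)" and ?b = "x [^] (int p * m2)"
  have "s \<otimes> t = y1 \<otimes> (?a \<otimes> y2) \<otimes> ?b" using s t x by (simp add: m_assoc QI)
  also have "\<dots> = y1 \<otimes> (y2 \<otimes> ?a) \<otimes> ?b" using F2' t by simp
  also have "\<dots> = (y1 \<otimes> y2) \<otimes> (?a \<otimes> ?b)" using s t x by (simp add: m_assoc QI)
  also have "\<dots> = (y2 \<otimes> y1) \<otimes> (?b \<otimes> ?a)"
  proof -
    have e1: "y1 \<otimes> y2 = y2 \<otimes> y1" using Qab s t by blast
    have e2: "?a \<otimes> ?b = ?b \<otimes> ?a" by (rule xpow_comm)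
    show ?thesis by (simp only: e1 e2)
  qed
  also have "\<dots> = y2 \<otimes> (y1 \<otimes> ?b) \<otimes> ?a" using s t x by (simp add: m_assoc QI)
  also have "\<dots> = y2 \<otimes> (?b \<otimes> y1) \<otimes> ?a" using F2' s by simp
  also have "\<dots> = t \<otimes> s" using s t x by (simp add: m_assoc QI)
  finally show ?thesis .
qed

lemma Ay_comm:
  assumes "y \<in> Q" "s \<in> Ay y" "t \<in> Ay y" shows "s \<otimes> t = t \<otimes> s"
proof -
  obtain a where s: "s = y \<otimes> x [^] (a::int) \<otimes> inv y" using assms(2) Ay_def by blast
  obtain b where t: "t = y \<otimes> x [^] (b::int) \<otimes> inv y" using assms(3) Ay_def by blast
  have yc: "y \<in> carrier G" using assms(1) by simp
  have "s \<otimes> t = y \<otimes> (x [^] a \<otimes> x [^] b) \<otimes> inv y" using s t yc x by (simp add: m_assoc)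
  also have "\<dots> = y \<otimes> (x [^] b \<otimes> x [^] a) \<otimes> inv y" using xpow_comm[of a b] by (simp only:)
  also have "\<dots> = t \<otimes> s" using s t yc x by (simp add: m_assoc)
  finally show ?thesis .
qed


lemma cover:
  assumes g: "g \<in> carrier G" shows "g \<in> A0 \<or> (\<exists>y\<in>Q. g \<in> Ay y)"
proof -
  obtain k y' where k: "y' \<in> Q" "g = x [^] (k::int) \<otimes> y'" using PQ[OF g] by blast
  show ?thesis
  proof (cases "int p dvd k")
    case True
    then obtain m where "k = int p * m" by blast
    then have "g = y' \<otimes> x [^] (int p * m)" using k F2' by simp
    then show ?thesis using k unfolding A0_def by blast
  next
    case False
    define a where "a = x [^] k"
    have a: "a \<in> carrier G" using x a_def by simp
    define c where "c = (\<lambda>y. inv a \<otimes> y \<otimes> a)"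
    have cQ: "c y \<in> Q" if "y \<in> Q" for y
      using conj[of "inv a" y] that a unfolding c_def by simp
    define \<phi> where "\<phi> = (\<lambda>y. c y \<otimes> inv y)"
    have phiQ: "\<phi> ` Q \<subseteq> Q" using cQ Qmult Qinv unfolding \<phi>_def by blast
    have inj: "inj_on \<phi> Q"
    proof (rule inj_onI)
      fix y1 y2 assume y1: "y1 \<in> Q" and y2: "y2 \<in> Q" and e: "\<phi> y1 = \<phi> y2"
      define z where "z = y1 \<otimes> inv y2"
      have zQ: "z \<in> Q" using y1 y2 Qmult Qinv z_def by blast
      have chom: "c z = c y1 \<otimes> inv (c y2)"
        unfolding c_def z_def using a y1 y2
        by (simp add: m_assoc inv_mult_group)
      have e2: "c y1 \<otimes> inv y1 = c y2 \<otimes> inv y2" using e unfolding \<phi>_def .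
      have "c y1 = c y2 \<otimes> inv y2 \<otimes> y1"
        using e2 y1 y2 cQ[OF y1] cQ[OF y2]
        by (metis QI inv_closed inv_solve_right m_closed)
      then have "c y1 \<otimes> inv (c y2) = c y2 \<otimes> (inv y2 \<otimes> y1) \<otimes> inv (c y2)"
        using y1 y2 cQ[OF y2] by (simp add: m_assoc)
      also have "\<dots> = (inv y2 \<otimes> y1) \<otimes> c y2 \<otimes> inv (c y2)"
        using Qab[OF cQ[OF y2], of "inv y2 \<otimes> y1"] y1 y2 Qmult Qinv by simp
      also have "\<dots> = inv y2 \<otimes> y1" using y1 y2 cQ[OF y2] by (simp add: m_assoc)
      also have "\<dots> = z" unfolding z_def using Qab[OF Qinv[OF y2] y1] .
      finally have "c z = z" using chom by simp
      then have "inv a \<otimes> z \<otimes> a = z" unfolding c_def .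
      then have "a \<otimes> z = z \<otimes> a" using a zQ
        by (metis QI inv_solve_left m_assoc m_closed inv_closed)
      then have "z = \<one>" using F3[OF zQ False] unfolding a_def by simp
      then show "y1 = y2" unfolding z_def using y1 y2
        by (metis QI inv_closed inv_equality r_inv inv_inv)
    qed
    have "\<phi> ` Q = Q" using endo_inj_surj[OF Qfin phiQ inj] .
    then obtain y where y: "y \<in> Q" "y' = \<phi> y" using k(1) by blast
    have "g = a \<otimes> (inv a \<otimes> y \<otimes> a \<otimes> inv y)" using k y unfolding \<phi>_def c_def a_def by simp
    also have "\<dots> = y \<otimes> a \<otimes> inv y" using a y by (simp add: m_assoc)
    finally have "g = y \<otimes> x [^] k \<otimes> inv y" unfolding a_def .
    then show ?thesis using y unfolding Ay_def by blast
  qed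
qed


lemma upper:
  assumes S: "pairwise_noncommuting G S" shows "card S \<le> card Q + 1"
proof -
  have Sc: "S \<subseteq> carrier G" and nc: "\<And>s t. s \<in> S \<Longrightarrow> t \<in> S \<Longrightarrow> s \<noteq> t \<Longrightarrow> s \<otimes> t \<noteq> t \<otimes> s"
    using S unfolding pairwise_noncommuting_def by blast+
  have Sfin: "finite S" using finite_subset[OF Sc fin] .
  define f where "f = (\<lambda>s. if s \<in> A0 then None else Some (SOME y. y \<in> Q \<and> s \<in> Ay y))"
  have fsome: "(SOME y. y \<in> Q \<and> s \<in> Ay y) \<in> Q \<and> s \<in> Ay (SOME y. y \<in> Q \<and> s \<in> Ay y)"
    if "s \<in> S" "s \<notin> A0" for s
  proof -
    have "\<exists>y. y \<in> Q \<and> s \<in> Ay y" using cover[of s] that Sc by blast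
    then show ?thesis by (rule someI_ex)
  qed
  have inj: "inj_on f S"
  proof (rule inj_onI)
    fix s t assume s: "s \<in> S" and t: "t \<in> S" and e: "f s = f t"
    show "s = t"
    proof (rule ccontr)
      assume ne: "s \<noteq> t"
      have "s \<otimes> t = t \<otimes> s"
      proof (cases "s \<in> A0")
        case True
        then have "t \<in> A0" using e unfolding f_def by (auto split: if_splits)
        then show ?thesis using A0_comm True by blast
      next
        case False
        then have tA: "t \<notin> A0" using e unfolding f_def by (auto split: if_splits)
        then have "(SOME y. y \<in> Q \<and> s \<in> Ay y) = (SOME y. y \<in> Q \<and> t \<in> Ay y)"
          using e False unfolding f_def by simp
        moreover have "s \<in> Ay (SOME y. y \<in> Q \<and> s \<in> Ay y)" using fsome[OF s False] by blast
        moreover have "t \<in> Ay (SOME y. y \<in> Q \<and> t \<in> Ay y)" using fsome[OF t tA] by blast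
        moreover have "(SOME y. y \<in> Q \<and> s \<in> Ay y) \<in> Q" using fsome[OF s False] by blast
        ultimately show ?thesis using Ay_comm by simp
      qed
      then show False using nc[OF s t ne] by blast
    qed
  qed
  have "f ` S \<subseteq> insert None (Some ` Q)" using fsome unfolding f_def by auto
  then have "card (f ` S) \<le> card (insert None (Some ` Q))"
    by (rule card_mono[rotated]) (use Qfin in simp)
  also have "\<dots> = card Q + 1" using Qfin by (simp add: card_image)
  finally show ?thesis using card_image[OF inj] by simp
qed

lemma keyK:
  assumes z: "z \<in> Q" and c: "x \<otimes> (z \<otimes> x \<otimes> inv z) = (z \<otimes> x \<otimes> inv z) \<otimes> x"
  shows "z = \<one>"
proof -
  define w where "w = z \<otimes> (x \<otimes> inv z \<otimes> inv x)"
  have wQ: "w \<in> Q" unfolding w_def using conj[OF x Qinv[OF z]] z Qmult by blast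
  have "z \<otimes> x \<otimes> inv z = w \<otimes> x" unfolding w_def using z x by (simp add: m_assoc)
  then have "x \<otimes> w \<otimes> x = w \<otimes> x \<otimes> x" using c x wQ by (simp add: m_assoc)
  then have "x \<otimes> w = w \<otimes> x" using x wQ by simp
  then have w1: "w = \<one>" using F1[OF wQ] by simp
  have "x \<otimes> inv z \<otimes> inv x = inv z \<otimes> (z \<otimes> (x \<otimes> inv z \<otimes> inv x))" using z x by simp
  also have "\<dots> = inv z" using w1 z unfolding w_def by simp
  finally have h: "x \<otimes> inv z \<otimes> inv x = inv z" .
  have "x \<otimes> inv z = (x \<otimes> inv z \<otimes> inv x) \<otimes> x" using x z by (simp add: m_assoc)
  also have "\<dots> = inv z \<otimes> x" using h by simp
  finally have "x \<otimes> inv z = inv z \<otimes> x" .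
  then have "inv z = \<one>" using F1[OF Qinv[OF z]] by simp
  then have "inv (inv z) = \<one>" by simp
  then show ?thesis using z by simp
qed

lemma lower: "\<exists>S. pairwise_noncommuting G S \<and> card S = card Q + 1"
proof -
  obtain q0 where q0: "q0 \<in> Q" "q0 \<noteq> \<one>" using Qne Qone by blast
  define f where "f = (\<lambda>y. y \<otimes> x \<otimes> inv y)"
  have fc: "f y \<in> carrier G" if "y \<in> Q" for y using that x unfolding f_def by simp
  have inj: "inj_on f Q"
  proof (rule inj_onI)
    fix y1 y2 assume y1: "y1 \<in> Q" and y2: "y2 \<in> Q" and e: "f y1 = f y2"
    define z where "z = inv y2 \<otimes> y1"
    have zQ: "z \<in> Q" unfolding z_def using y1 y2 Qmult Qinv by blast
    have "z \<otimes> x \<otimes> inv z = inv y2 \<otimes> (y1 \<otimes> x \<otimes> inv y1) \<otimes> y2"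
      unfolding z_def using y1 y2 x by (simp add: m_assoc inv_mult_group)
    also have "\<dots> = x" using e y1 y2 x unfolding f_def by (simp add: m_assoc)
    finally have "z \<otimes> x \<otimes> inv z = x" .
    then have "z \<otimes> x \<otimes> inv z \<otimes> z = x \<otimes> z" by simp
    then have "x \<otimes> z = z \<otimes> x" using zQ x by (simp add: m_assoc)
    then have "z = \<one>" using F1[OF zQ] by simp
    moreover have "y1 = y2 \<otimes> z" unfolding z_def using y1 y2 by simp
    ultimately show "y1 = y2" using y2 by simp
  qed
  have q0n: "q0 \<notin> f ` Q"
  proof
    assume "q0 \<in> f ` Q"
    then obtain y where y: "y \<in> Q" "q0 = y \<otimes> x \<otimes> inv y" unfolding f_def by blast
    have "inv y \<otimes> q0 \<otimes> inv (inv y) = x" using y x by (simp add: m_assoc)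
    moreover have "inv y \<otimes> q0 \<otimes> inv (inv y) \<in> Q" using conj[of "inv y" q0] y q0 by simp
    ultimately have "x \<in> Q" by simp
    then show False using F1[of x] xne by simp
  qed
  define S where "S = insert q0 (f ` Q)"
  have card: "card S = card Q + 1"
    unfolding S_def using q0n Qfin card_image[OF inj] by simp
  have "pairwise_noncommuting G S"
    unfolding pairwise_noncommuting_def
  proof (intro conjI ballI impI)
    show "S \<subseteq> carrier G" unfolding S_def using fc q0 by auto
  next
    have qf: "q0 \<otimes> f y \<noteq> f y \<otimes> q0" if y: "y \<in> Q" for y
    proof
      assume e: "q0 \<otimes> f y = f y \<otimes> q0"
      define w where "w = inv y \<otimes> q0 \<otimes> y"
      have wQ: "w \<in> Q" using conj[of "inv y" q0] y q0 unfolding w_def by simp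
      have "inv y \<otimes> (q0 \<otimes> f y) \<otimes> y = w \<otimes> x" unfolding w_def f_def using y q0 x
        by (simp add: m_assoc)
      moreover have "inv y \<otimes> (f y \<otimes> q0) \<otimes> y = x \<otimes> w" unfolding w_def f_def using y q0 x
        by (simp add: m_assoc)
      ultimately have "x \<otimes> w = w \<otimes> x" using e by simp
      then have "w = \<one>" using F1[OF wQ] by simp
      moreover have "q0 = y \<otimes> w \<otimes> inv y" unfolding w_def using y q0 by (simp add: m_assoc)
      ultimately have "q0 = \<one>" using y by simp
      then show False using q0 by simp
    qed
    have ff: "f y1 \<otimes> f y2 \<noteq> f y2 \<otimes> f y1" if y1: "y1 \<in> Q" and y2: "y2 \<in> Q" and ne: "y1 \<noteq> y2" for y1 y2
    proof
      assume e: "f y1 \<otimes> f y2 = f y2 \<otimes> f y1"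
      define z where "z = inv y1 \<otimes> y2"
      have zQ: "z \<in> Q" unfolding z_def using y1 y2 Qmult Qinv by blast
      have h: "inv y1 \<otimes> f y2 \<otimes> y1 = z \<otimes> x \<otimes> inv z"
        unfolding z_def f_def using y1 y2 x by (simp add: m_assoc inv_mult_group)
      have "inv y1 \<otimes> (f y1 \<otimes> f y2) \<otimes> y1 = x \<otimes> (inv y1 \<otimes> f y2 \<otimes> y1)"
        unfolding f_def using y1 y2 x by (simp add: m_assoc)
      moreover have "inv y1 \<otimes> (f y2 \<otimes> f y1) \<otimes> y1 = (inv y1 \<otimes> f y2 \<otimes> y1) \<otimes> x"
        unfolding f_def using y1 y2 x by (simp add: m_assoc)
      ultimately have "x \<otimes> (z \<otimes> x \<otimes> inv z) = (z \<otimes> x \<otimes> inv z) \<otimes> x" using e h by simp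
      then have "z = \<one>" using keyK zQ by blast
      moreover have "y2 = y1 \<otimes> z" unfolding z_def using y1 y2 by simp
      ultimately have "y1 = y2" using y1 by simp
      then show False using ne by simp
    qed
    fix s t assume s: "s \<in> S" and t: "t \<in> S" and ne: "s \<noteq> t"
    show "s \<otimes> t \<noteq> t \<otimes> s"
    proof (cases "s = q0")
      case True
      then have "t \<in> f ` Q" using t ne unfolding S_def by blast
      then obtain y where "y \<in> Q" "t = f y" by blast
      then show ?thesis using qf True by blast
    next
      case False
      then obtain y1 where y1: "y1 \<in> Q" "s = f y1" using s unfolding S_def by blast
      show ?thesis
      proof (cases "t = q0")
        case True
        then show ?thesis using qf[OF y1(1)] y1 by metis
      next
        case False
        then obtain y2 where y2: "y2 \<in> Q" "t = f y2" using t unfolding S_def by blast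
        then have "y1 \<noteq> y2" using ne y1 by blast
        then show ?thesis using ff[OF y1(1) y2(1)] y1 y2 by simp
      qed
    qed
  qed
  then show ?thesis using card by blast
qed

lemma omega_eq: "omega G = card Q + 1"
proof -
  have fin2: "finite {S. pairwise_noncommuting G S}"
    by (rule finite_subset[of _ "Pow (carrier G)"]) (use fin in \<open>auto simp: pairwise_noncommuting_def\<close>)
  obtain S0 where S0: "pairwise_noncommuting G S0" "card S0 = card Q + 1" using lower by blast
  have mem: "card Q + 1 \<in> card ` {S. pairwise_noncommuting G S}"
    using S0 by (metis (mono_tags) image_eqI mem_Collect_eq)
  show ?thesis unfolding omega_def
    by (rule Max_eqI) (use fin2 upper mem in auto)
qed

end


lemma (in group) comm_pair:
  assumes "u \<in> carrier G" "v \<in> carrier G" "c \<in> carrier G" "d \<in> carrier G"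
    "u \<otimes> c = c \<otimes> u" "u \<otimes> d = d \<otimes> u" "v \<otimes> c = c \<otimes> v" "v \<otimes> d = d \<otimes> v"
  shows "(u \<otimes> v) \<otimes> (c \<otimes> d) = (c \<otimes> d) \<otimes> (u \<otimes> v)"
proof -
  have "(c \<otimes> d) \<otimes> u = u \<otimes> (c \<otimes> d)" using assms by (intro comm_mult) auto
  moreover have "(c \<otimes> d) \<otimes> v = v \<otimes> (c \<otimes> d)" using assms by (intro comm_mult) auto
  ultimately show ?thesis using assms by (intro comm_mult) auto
qed

lemma (in group) card_subgroup_dvd:
  assumes "subgroup I G" "subgroup J G" "I \<subseteq> J"
  shows "card I dvd card J"
proof -
  have gJ: "group (G\<lparr>carrier := J\<rparr>)" using subgroup.subgroup_is_group[OF assms(2) is_group] .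
  have "subgroup I (G\<lparr>carrier := J\<rparr>)" using subgroup_incl[OF assms] .
  from group.lagrange[OF gJ this] show ?thesis unfolding order_def by (metis dvd_triv_right partial_object.select_convs(1) partial_object.surjective partial_object.update_convs(1))
qed

lemma (in group) main_thm:
  fixes p q :: nat and P Q :: "'a set"
  assumes "Factorial_Ring.prime p" and "Factorial_Ring.prime q" and "p \<noteq> q"
    and "finite (carrier G)"
    and "minimal_nonabelian G"
    and "P <#>\<^bsub>G\<^esub> Q = carrier G"
    and "sylow_subgroup G p P" and "cyclic_group (subgroup_generated G P)"
    and "sylow_subgroup G q Q" and "elementary_abelian G q Q"
    and "minimal_normal G Q"
  shows "omega G = card Q + 1"
proof -
  note pp = assms(1) and qp = assms(2) and pq = assms(3) and fin = assms(4)
  have nonab: "\<not> abelian_subset G (carrier G)" using assms(5) unfolding minimal_nonabelian_def by blast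
  have minab: "\<And>H. subgroup H G \<Longrightarrow> H \<noteq> carrier G \<Longrightarrow> abelian_subset G H"
    using assms(5) unfolding minimal_nonabelian_def by blast
  have Psg: "subgroup P G" and cardP: "card P = p ^ multiplicity p (order G)"
    using assms(7) unfolding sylow_subgroup_def by blast+
  have Qsg: "subgroup Q G" and cardQ: "card Q = q ^ multiplicity q (order G)"
    using assms(9) unfolding sylow_subgroup_def by blast+
  have Qab: "\<And>a b. a \<in> Q \<Longrightarrow> b \<in> Q \<Longrightarrow> a \<otimes> b = b \<otimes> a"
    using assms(10) unfolding elementary_abelian_def abelian_subset_def by blast
  have Qn: "Q \<lhd> G" and Qne: "Q \<noteq> {\<one>}"
    and Qmin: "\<And>M. M \<lhd> G \<Longrightarrow> M \<subseteq> Q \<Longrightarrow> M \<noteq> {\<one>} \<Longrightarrow> M = Q"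
    using assms(11) unfolding minimal_normal_def by blast+
  have QI: "\<And>y. y \<in> Q \<Longrightarrow> y \<in> carrier G" using subgroup.subset[OF Qsg] by blast
  have PI: "\<And>y. y \<in> P \<Longrightarrow> y \<in> carrier G" using subgroup.subset[OF Psg] by blast
  obtain x where xP: "x \<in> P" and Pdef: "P = range (\<lambda>n::int. x [^] n)"
  proof -
    have gS: "group (subgroup_generated G P)" by (rule group_subgroup_generated)
    have cS: "carrier (subgroup_generated G P) = P"
      using subgroup.carrier_subgroup_generated_subgroup[OF Psg] .
    obtain x where "x \<in> carrier (subgroup_generated G P)"
      "carrier (subgroup_generated G P) = range (\<lambda>n::int. x [^]\<^bsub>subgroup_generated G P\<^esub> n)"
      using group.cyclic_group[OF gS] assms(8) by blast
    then show ?thesis using that cS int_pow_subgroup_generated by auto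
  qed
  have x: "x \<in> carrier G" using xP PI by blast
  have PQ: "\<And>g. g \<in> carrier G \<Longrightarrow> \<exists>k::int. \<exists>y\<in>Q. g = x [^] k \<otimes> y"
  proof -
    fix g assume "g \<in> carrier G"
    then have "g \<in> P <#> Q" using assms(6) by simp
    then obtain h y where "h \<in> P" "y \<in> Q" "g = h \<otimes> y" unfolding set_mult_def by blast
    then show "\<exists>k::int. \<exists>y\<in>Q. g = x [^] k \<otimes> y" using Pdef by blast
  qed
  have xQ: "\<exists>y\<in>Q. x \<otimes> y \<noteq> y \<otimes> x"
  proof (rule ccontr)
    assume "\<not> ?thesis"
    then have c: "\<And>y. y \<in> Q \<Longrightarrow> x \<otimes> y = y \<otimes> x" by blast
    have "abelian_subset G (carrier G)" unfolding abelian_subset_def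
    proof (intro ballI)
      fix g1 g2 assume g1: "g1 \<in> carrier G" and g2: "g2 \<in> carrier G"
      obtain a y1 where a: "y1 \<in> Q" "g1 = x [^] (a::int) \<otimes> y1" using PQ[OF g1] by blast
      obtain b y2 where b: "y2 \<in> Q" "g2 = x [^] (b::int) \<otimes> y2" using PQ[OF g2] by blast
      have c1: "x [^] a \<otimes> y2 = y2 \<otimes> x [^] a" using comm_int_pow x QI b c by blast
      have c2: "x [^] b \<otimes> y1 = y1 \<otimes> x [^] b" using comm_int_pow x QI a c by blast
      have c3: "x [^] a \<otimes> x [^] b = x [^] b \<otimes> x [^] a"
        using x by (simp add: int_pow_mult[symmetric] add.commute)
      show "g1 \<otimes> g2 = g2 \<otimes> g1" unfolding a b
        by (rule comm_pair) (use x QI a b c1 c2 c3 Qab in auto)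
    qed
    then show False using nonab by blast
  qed
  have xne: "x \<noteq> \<one>" using xQ QI by auto
  have F1: "\<And>y. y \<in> Q \<Longrightarrow> x \<otimes> y = y \<otimes> x \<Longrightarrow> y = \<one>"
  proof -
    define C where "C = {y \<in> Q. x \<otimes> y = y \<otimes> x}"
    have CsubQ: "C \<subseteq> Q" unfolding C_def by blast
    have Csg: "subgroup C G"
    proof (rule subgroupI)
      show "C \<subseteq> carrier G" using CsubQ QI by blast
      show "C \<noteq> {}" unfolding C_def using subgroup.one_closed[OF Qsg] x by auto
      fix a assume a: "a \<in> C"
      then show "inv a \<in> C" unfolding C_def
        using subgroup.m_inv_closed[OF Qsg] comm_inv[of a x] x QI by auto
    next
      fix a b assume a: "a \<in> C" and b: "b \<in> C"
      then show "a \<otimes> b \<in> C" unfolding C_def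
        using subgroup.m_closed[OF Qsg] comm_mult[of a b x] x QI by auto
    qed
    have Cn: "C \<lhd> G" unfolding normal_inv_iff
    proof (intro conjI ballI)
      show "subgroup C G" by (rule Csg)
      fix g h assume g: "g \<in> carrier G" and h: "h \<in> C"
      obtain k y where y: "y \<in> Q" "g = x [^] (k::int) \<otimes> y" using PQ[OF g] by blast
      have hQ: "h \<in> Q" and hx: "x \<otimes> h = h \<otimes> x" using h unfolding C_def by auto
      have "g \<otimes> h = h \<otimes> g" unfolding y(2)
      proof (rule comm_mult)
        show "x [^] k \<otimes> h = h \<otimes> x [^] k" using comm_int_pow[of x h k] x QI[OF hQ] hx by blast
        show "y \<otimes> h = h \<otimes> y" using Qab[OF y(1) hQ] .
      qed (use x QI hQ y in auto)
      then have "g \<otimes> h \<otimes> inv g = h" using g hQ QI by (simp add: m_assoc)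
      then show "g \<otimes> h \<otimes> inv g \<in> C" using h by simp
    qed
    have "C \<noteq> Q" using xQ unfolding C_def by blast
    then have C1: "C = {\<one>}" using Qmin[OF Cn CsubQ] by blast
    fix y assume "y \<in> Q" "x \<otimes> y = y \<otimes> x"
    then have "y \<in> C" unfolding C_def by blast
    then show "y = \<one>" using C1 by blast
  qed
  have PQ1: "P \<inter> Q = {\<one>}"
  proof -
    have sgI: "subgroup (P \<inter> Q) G" using subgroups_Inter_pair[OF Psg Qsg] .
    have d1: "card (P \<inter> Q) dvd p ^ multiplicity p (order G)"
      using card_subgroup_dvd[OF sgI Psg] cardP by simp
    have d2: "card (P \<inter> Q) dvd q ^ multiplicity q (order G)"
      using card_subgroup_dvd[OF sgI Qsg] cardQ by simp
    have "coprime p q" using primes_coprime[OF pp qp pq] .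
    then have "coprime (p ^ multiplicity p (order G)) (q ^ multiplicity q (order G))" by simp
    then have "card (P \<inter> Q) = 1" using d1 d2
      by (metis coprime_common_divisor_nat)
    moreover have "\<one> \<in> P \<inter> Q" using subgroup.one_closed[OF Psg] subgroup.one_closed[OF Qsg] by blast
    ultimately show ?thesis by (metis card_1_singletonE singletonD)
  qed
  have ordx: "ord x = card P"
    using generate_pow_card[OF x] generate_pow[OF x] Pdef by (simp add: full_SetCompr_eq)
  have pdvd: "p dvd card P"
  proof (cases "multiplicity p (order G) = 0")
    case True
    then have "card P = 1" using cardP by simp
    moreover have "\<one> \<in> P" using subgroup.one_closed[OF Psg] .
    ultimately have "P = {\<one>}" by (metis card_1_singletonE singletonD)
    then show ?thesis using xP xne by blast
  next
    case False
    then show ?thesis using cardP by simp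
  qed
  have F2: "\<And>y. y \<in> Q \<Longrightarrow> x [^] (int p) \<otimes> y = y \<otimes> x [^] (int p)"
  proof -
    let ?K = "generate G {x [^] int p}"
    have xp: "x [^] int p \<in> carrier G" using x by simp
    have Ksg: "subgroup ?K G" using generate_is_subgroup[of "{x [^] int p}"] xp by blast
    define H where "H = Q <#> ?K"
    have Hsg: "subgroup H G" unfolding H_def using mult_norm_subgroup[OF Qn Ksg] .
    have "x \<notin> H"
    proof
      assume "x \<in> H"
      then obtain y h where yh: "y \<in> Q" "h \<in> ?K" "x = y \<otimes> h" unfolding H_def set_mult_def by blast
      obtain k where "h = (x [^] int p) [^] (k::int)" using yh(2) generate_pow[OF xp] by blast
      then have h: "h = x [^] (int p * k)" using x by (simp add: int_pow_pow)
      have hc: "h \<in> carrier G" using yh(2) subgroup.subset[OF Ksg] by blast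
      have e: "y \<otimes> h = x" using yh(3) by simp
      have "y = (y \<otimes> h) \<otimes> inv h" using yh(1) QI hc by (simp add: m_assoc)
      then have "y = x \<otimes> inv h" by (simp only: e)
      then have y: "y = x [^] (1 - int p * k)" using x h by (simp add: int_pow_diff)
      then have "y \<in> P" using Pdef by blast
      then have "y = \<one>" using yh PQ1 by blast
      then have "int (ord x) dvd (1 - int p * k)" using int_pow_eq_id[OF x] y by simp
      then have "int p dvd (1 - int p * k)" using pdvd ordx
        by (metis dvd_trans of_nat_dvd_iff)
      then have "int p dvd 1"
        by (metis dvd_add_times_triv_right_iff diff_add_cancel mult.commute)
      then show False using pp by (simp add: prime_nat_iff)
    qed
    then have "H \<noteq> carrier G" using x by blast
    then have Hab: "abelian_subset G H" using minab Hsg by blast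
    fix y assume y: "y \<in> Q"
    have "y \<in> H" unfolding H_def set_mult_def
      using y generate.one[of G "{x [^] int p}"] QI by force
    moreover have "x [^] int p \<in> H" unfolding H_def set_mult_def
      using subgroup.one_closed[OF Qsg] generate.incl[of "x [^] int p" "{x [^] int p}" G] xp by force
    ultimately show "x [^] int p \<otimes> y = y \<otimes> x [^] int p" using Hab unfolding abelian_subset_def by blast
  qed
  have S: "mn_setup G Q x p"
    apply (rule mn_setup.intro[OF is_group])
    apply (rule mn_setup_axioms.intro)
    apply (fact fin)
    apply (fact Qn)
    apply (fact Qab)
    apply (fact x)
    apply (fact PQ)
    apply (fact xne)
    apply (fact F1)
    apply (fact F2)
    apply (fact pp)
    apply (fact Qne)
    done
  show ?thesis by (rule mn_setup.omega_eq[OF S])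
qed

theorem theorem2p5:
  fixes G :: "('a, 'b) monoid_scheme" and p q :: nat and P Q :: "'a set"
  assumes "Factorial_Ring.prime p" and "Factorial_Ring.prime q" and "p \<noteq> q"
    and "finite (carrier G)"
    and "minimal_nonabelian G"
    and "P <#>\<^bsub>G\<^esub> Q = carrier G"
    and "sylow_subgroup G p P" and "cyclic_group (subgroup_generated G P)"
    and "sylow_subgroup G q Q" and "elementary_abelian G q Q"
    and "minimal_normal G Q"
  shows "omega G = card Q + 1"
proof -
  have grp: "group G" using assms(5) unfolding minimal_nonabelian_def by blast
  show ?thesis using group.main_thm[OF grp assms] .
qed

end
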